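(* Let $r,k,m$ be positive integers with $r\neq k$, and let $\alpha>\max\{k,r\}$ be real such that $\alpha-m$ is not a negative integer and $\alpha\neq m+r-j$, $\alpha\ne m+k-j$ for $j=1,\dots,m$. Then $$\sum_{n=1}^\infty\frac{H_{n+\alpha-m}}{(n+r)(n+k)}=\frac{k-\alpha}{k-r}\left\{\frac{H_{\alpha-k}^2+H_{\alpha-k}^{(2)}}{\alpha-k}-\sum_{j=1}^k\frac{H_{\alpha+j-k}}{j(\alpha+j-k)}\right\}+\frac{\alpha-r}{k-r}\left\{\frac{H_{\alpha-r}^2+H_{\alpha-r}^{(2)}}{\alpha-r}-\sum_{j=1}^r\frac{H_{\alpha+j-r}}{j(\alpha+j-r)}\right\}$$ $$-\frac{1}{k-r}\sum_{j=1}^m\left\{\frac{H_{j+\alpha-m}-H_r}{j+\alpha-m-r}-\frac{H_{j+\alpha-m}-H_k}{j+\alpha-m-k}\right\}.$$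
   Context: Shifted harmonic numbers: for a real $\alpha$ that is not a negative integer, $H_\alpha := \sum_{k=1}^\infty\left(\frac1k-\frac1{k+\alpha}\right)$ and, for integers $m\ge 2$, $H_\alpha^{(m)} := \sum_{k=1}^\infty\left(\frac1{k^m}-\frac1{(k+\alpha)^m}\right)=\zeta(m)-\zeta(m,\alpha+1)$, where $\zeta$ is the Riemann zeta function and $\zeta(s,\alpha+1)=\sum_{n=1}^\infty (n+\alpha)^{-s}$ is the Hurwitz zeta function. For nonnegative integers these are the ordinary harmonic numbers. Powers such as $H_\alpha^2$ mean $(H_\alpha)^2$. Empty sums are $0$. *)

theory Defs
  imports "HOL-Analysis.Analysis"
begin

definition shifted_harm :: "real \<Rightarrow> real" where
  "shifted_harm a = (\<Sum>k. 1 / real (Suc k) - 1 / (real (Suc k) + a))"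

definition shifted_harm2 :: "real \<Rightarrow> real" where
  "shifted_harm2 a = (\<Sum>k. 1 / (real (Suc k))^2 - 1 / (real (Suc k) + a)^2)"

end

theory Submission
  imports Defs "HOL-Real_Asymp.Real_Asymp"
begin


lemma sq_summable: "summable (\<lambda>n. 1 / real (Suc n) ^ 2)"
proof -
  have "summable (\<lambda>n. 1 / real n ^ 2)"
    using inverse_power_summable[of 2, where 'a=real] by (simp add: inverse_eq_divide)
  then show ?thesis using summable_Suc_iff[of "\<lambda>n. 1 / real n ^ 2"] by blast
qed

lemma sh_summable: "summable (\<lambda>k. 1 / real (Suc k) - 1 / (real (Suc k) + a))"
proof (rule summable_comparison_test_ev)
  show "summable (\<lambda>k. 2 * \<bar>a\<bar> * (1 / real (Suc k) ^ 2))"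
    by (intro summable_mult sq_summable)
  have "eventually (\<lambda>k. real (Suc k) \<ge> 2 * \<bar>a\<bar>) sequentially"
    by real_asymp
  then show "eventually (\<lambda>k. norm (1 / real (Suc k) - 1 / (real (Suc k) + a)) \<le> 2 * \<bar>a\<bar> * (1 / real (Suc k) ^ 2)) sequentially"
  proof eventually_elim
    case (elim k)
    define x where "x = real (Suc k)"
    have x: "x > 0" "x \<ge> 2 * \<bar>a\<bar>" using elim by (auto simp: x_def)
    have p: "x + a \<ge> x / 2" using x by linarith
    have p0: "x + a > 0" using p x by linarith
    have "1 / x - 1 / (x + a) = a / (x * (x + a))" using x p0 by (simp add: field_simps)
    also have "norm \<dots> = \<bar>a\<bar> / (x * (x + a))" using x p0 by (simp add: abs_mult)
    also have "\<dots> \<le> \<bar>a\<bar> / (x * (x / 2))"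
      by (intro divide_left_mono mult_left_mono p) (use x p0 in auto)
    also have "\<dots> = 2 * \<bar>a\<bar> * (1 / x ^ 2)" by (simp add: field_simps power2_eq_square)
    finally show ?case by (simp add: x_def)
  qed
qed

lemma sh_sums: "(\<lambda>k. 1 / real (Suc k) - 1 / (real (Suc k) + a)) sums shifted_harm a"
  unfolding shifted_harm_def using sh_summable by (rule summable_sums)

lemma sh_rec: "shifted_harm (x + 1) = shifted_harm x + 1 / (x + 1)"
proof -
  have t: "(\<lambda>k. 1 / (real (Suc k) + x) - 1 / (real (Suc (Suc k)) + x)) sums (1 / (real (Suc 0) + x) - 0)"
    by (rule telescope_sums'[where f = "\<lambda>k. 1 / (real (Suc k) + x)"]) real_asymp
  have "(\<lambda>k. (1 / real (Suc k) - 1 / (real (Suc k) + (x + 1))) - (1 / real (Suc k) - 1 / (real (Suc k) + x)))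
          sums (shifted_harm (x+1) - shifted_harm x)"
    by (intro sums_diff sh_sums)
  moreover have "(\<lambda>k. (1 / real (Suc k) - 1 / (real (Suc k) + (x + 1))) - (1 / real (Suc k) - 1 / (real (Suc k) + x)))
     = (\<lambda>k. 1 / (real (Suc k) + x) - 1 / (real (Suc (Suc k)) + x))"
    by (auto simp: algebra_simps)
  ultimately have "(\<lambda>k. 1 / (real (Suc k) + x) - 1 / (real (Suc (Suc k)) + x)) sums (shifted_harm (x+1) - shifted_harm x)"
    by simp
  from sums_unique2[OF this t] show ?thesis by (simp add: add.commute)
qed

lemma sh_iter: "shifted_harm (x + real m) = shifted_harm x + (\<Sum>i<m. 1 / (x + real (Suc i)))"
proof (induction m)
  case 0 then show ?case by simp
next
  case (Suc m)
  have e: "x + real (Suc m) = (x + real m) + 1" by simp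
  have "shifted_harm (x + real (Suc m)) = shifted_harm ((x + real m) + 1)" by (simp only: e)
  also have "\<dots> = shifted_harm (x + real m) + 1 / (x + real m + 1)" by (rule sh_rec)
  finally show ?case using Suc by (simp add: add.assoc)
qed

lemma sh_0: "shifted_harm 0 = 0" by (simp add: shifted_harm_def)

lemma sh_nonneg: "x \<ge> 0 \<Longrightarrow> shifted_harm x \<ge> 0"
  unfolding shifted_harm_def
  by (intro suminf_nonneg sh_summable) (auto simp: field_simps)



lemma row_sums:
  assumes "x > 0"
  shows "(\<lambda>i. 1 / (real (Suc i) * (real (Suc i) + x))) sums (shifted_harm x / x)"
proof -
  have "(\<lambda>i. (1 / real (Suc i) - 1 / (real (Suc i) + x)) / x) sums (shifted_harm x / x)"
    by (intro sums_divide sh_sums)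
  moreover have "\<And>y. y > 0 \<Longrightarrow> (1 / y - 1 / (y + x)) / x = 1 / (y * (y + x))"
  proof -
    fix y :: real assume y: "y > 0"
    then have "y + x > 0" using assms by simp
    then show "(1 / y - 1 / (y + x)) / x = 1 / (y * (y + x))" using y assms by (simp add: divide_simps; simp add: algebra_simps)
  qed
  then have "\<And>i. (1 / real (Suc i) - 1 / (real (Suc i) + x)) / x = 1 / (real (Suc i) * (real (Suc i) + x))"
    by (metis of_nat_0_less_iff zero_less_Suc)
  ultimately show ?thesis by simp
qed

lemma sh_partial:
  "shifted_harm (real n + c) = (\<Sum>j<n. 1 / real (Suc j)) + shifted_harm c
     - (\<Sum>i<n. 1 / real (Suc i) - 1 / (real (Suc i) + c))"
  using sh_iter[of c n] by (simp add: sum_subtractf add.commute)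

lemma L1:
  fixes c :: real
  assumes c: "c > 0"
  shows "(\<lambda>n. shifted_harm (real (Suc n) + c) * (1 / real (Suc n) - 1 / (real (Suc n) + c)))
           sums (shifted_harm c ^ 2 + shifted_harm2 c)"
proof -
  define a where "a n = 1 / real (Suc n) - 1 / (real (Suc n) + c)" for n
  define R where "R n = shifted_harm (real (Suc n) + c) * a n" for n
  define A where "A n = (\<Sum>i<n. a i)" for n
  define hh where "hh n = (\<Sum>j<n. 1 / real (Suc j))" for n
  define T where "T n = shifted_harm c - A n" for n
  define g where "g p = c / (real (Suc (fst p)) * real (Suc (snd p)) * (real (Suc (fst p)) + real (Suc (snd p)) + c))" for p :: "nat \<times> nat"
  have a_eq: "a n = c / (real (Suc n) * (real (Suc n) + c))" for n
    unfolding a_def using c by (simp add: field_simps)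
  have a_nn: "a n \<ge> 0" for n unfolding a_eq using c by simp
  have R_nn: "R n \<ge> 0" for n unfolding R_def using c a_nn by (intro mult_nonneg_nonneg sh_nonneg) auto
  have g_nn: "g p \<ge> 0" for p unfolding g_def using c by simp
  have row: "(\<lambda>i. g (N, i)) sums R N" for N
  proof -
    have "(\<lambda>i. c / real (Suc N) * (1 / (real (Suc i) * (real (Suc i) + (real (Suc N) + c)))))
       sums (c / real (Suc N) * (shifted_harm (real (Suc N) + c) / (real (Suc N) + c)))"
      by (intro sums_mult row_sums) (use c in simp)
    moreover have "\<And>i. c / real (Suc N) * (1 / (real (Suc i) * (real (Suc i) + (real (Suc N) + c)))) = g (N, i)"
      unfolding g_def by (simp add: field_simps)
    moreover have "c / real (Suc N) * (shifted_harm (real (Suc N) + c) / (real (Suc N) + c)) = R N"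
      unfolding R_def a_eq by (simp add: field_simps)
    ultimately show ?thesis by simp
  qed
  define b where "b n = shifted_harm (real (Suc n) + c) / real (Suc n)" for n
  define u where "u n = shifted_harm (real (Suc n) + c) / (real (Suc n) * real (Suc (Suc n)))" for n
  define e where "e n = 1 / real (Suc (Suc n)) ^ 2" for n
  have e_sum: "summable e" unfolding e_def using sq_summable summable_Suc_iff[of "\<lambda>n. 1 / real (Suc n) ^ 2"] by simp
  have u_le: "u n \<le> (b n - b (Suc n)) + e n" for n
  proof -
    have r: "shifted_harm (real (Suc (Suc n)) + c) = shifted_harm (real (Suc n) + c) + 1 / (real (Suc n) + c + 1)"
      using sh_rec[of "real (Suc n) + c"] by (simp add: add_ac)
    have gen: "H0 / (y * (y + 1)) = (H0 / y - (H0 + 1 / (y + c + 1)) / (y + 1)) + 1 / ((y + 1) * (y + c + 1))"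
      if "y > 0" for y H0 :: real
    proof -
      have "y + 1 > 0" "y + c + 1 > 0" using that c by auto
      then show ?thesis using that by (simp add: divide_simps; simp add: algebra_simps)
    qed
    have "u n = (b n - b (Suc n)) + 1 / (real (Suc (Suc n)) * (real (Suc n) + c + 1))"
      unfolding u_def b_def r using gen[of "real (Suc n)" "shifted_harm (real (Suc n) + c)"]
      by (simp add: add_ac)
    also have "1 / (real (Suc (Suc n)) * (real (Suc n) + c + 1)) \<le> e n"
    proof -
      have gz: "1/(z * (z + c)) \<le> 1/z^2" if "z > 0" for z :: real
        using that c by (intro divide_left_mono) (auto simp: power2_eq_square intro!: mult_left_mono)
      have "real (Suc n) + c + 1 = real (Suc (Suc n)) + c" by simp
      then show ?thesis unfolding e_def using gz[of "real (Suc (Suc n))"] by (simp add: add_ac)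
    qed
    finally show ?thesis by simp
  qed
  have u_nn: "u n \<ge> 0" for n unfolding u_def using c by (intro divide_nonneg_nonneg sh_nonneg) auto
  have u_sum: "summable u"
  proof (rule bounded_imp_summable[OF u_nn])
    fix n
    have "(\<Sum>k\<le>n. u k) \<le> (\<Sum>k\<le>n. (b k - b (Suc k)) + e k)" by (intro sum_mono u_le)
    also have "\<dots> = b 0 - b (Suc n) + (\<Sum>k\<le>n. e k)" by (simp add: sum.distrib sum_telescope)
    finally have 1: "(\<Sum>k\<le>n. u k) \<le> b 0 - b (Suc n) + (\<Sum>k\<le>n. e k)" .
    have 2: "(\<Sum>k\<le>n. e k) \<le> suminf e"
      by (intro sum_le_suminf e_sum) (auto simp: e_def)
    have 3: "b (Suc n) \<ge> 0" unfolding b_def using c by (intro divide_nonneg_nonneg sh_nonneg) auto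
    show "(\<Sum>k\<le>n. u k) \<le> b 0 + suminf e" using 1 2 3 by linarith
  qed
  have R_sum: "summable R"
  proof (rule summable_comparison_test[OF _ summable_mult[OF u_sum, of "c + 1"]])
    show "\<exists>N. \<forall>n\<ge>N. norm (R n) \<le> (c + 1) * u n"
    proof (intro exI allI impI)
      fix n :: nat
      have h: "shifted_harm (real (Suc n) + c) \<ge> 0" using c by (intro sh_nonneg) auto
      have "c / (real (Suc n) * (real (Suc n) + c)) \<le> (c + 1) / (real (Suc n) * real (Suc (Suc n)))"
      proof -
        have gy: "c/(y*(y+c)) \<le> (c+1)/(y*(y+1))" if "y > 0" for y :: real
          using that c by (simp add: divide_simps) (simp add: algebra_simps mult_pos_pos add_pos_pos)
        show ?thesis using gy[of "real (Suc n)"] by (simp add: add_ac)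
      qed
      then have "R n \<le> (c + 1) * u n"
        unfolding R_def u_def a_eq using h
        by (metis mult.commute mult_left_mono times_divide_eq_right)
      then show "norm (R n) \<le> (c + 1) * u n" using R_nn by simp
    qed
  qed
  have g_sum: "g summable_on (Sigma UNIV (\<lambda>_. UNIV))"
  proof (rule summable_on_SigmaI[where g = R])
    show "((\<lambda>y. g (x, y)) has_sum R x) UNIV" for x
      by (rule sums_nonneg_imp_has_sum[OF row]) (rule g_nn)
    show "R summable_on UNIV" using R_sum R_nn by (intro summable_nonneg_imp_summable_on) auto
  qed (rule g_nn)
  then obtain F where gF: "(g has_sum F) (Sigma UNIV (\<lambda>_. UNIV))" by (auto simp: summable_on_def)
  have RF: "R sums F"
  proof -
    have "(R has_sum F) UNIV"
      by (rule has_sum_SigmaD[OF gF]) (rule sums_nonneg_imp_has_sum[OF row], rule g_nn)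
    then show ?thesis by (rule has_sum_imp_sums)
  qed
  define h where "h q = g (fst q - snd q, snd q)" for q :: "nat \<times> nat"
  have hF: "(h has_sum F) (Sigma UNIV atMost)"
  proof -
    have "(h has_sum F) (Sigma UNIV atMost) = (g has_sum F) (Sigma UNIV (\<lambda>_. UNIV))"
      by (rule has_sum_reindex_bij_witness[where j = "\<lambda>q. (fst q - snd q, snd q)" and i = "\<lambda>p. (fst p + snd p, snd p)"])
         (auto simp: h_def)
    then show ?thesis using gF by simp
  qed
  define E where "E n = 2 * a n * hh n" for n
  have diag: "(\<Sum>j\<le>M. h (M, j)) = E (Suc M)" for M
  proof -
    have hj: "h (M, j) = a (Suc M) * (1 / real (Suc (M - j)) + 1 / real (Suc j))" if "j \<le> M" for j
    proof -
      have s: "real (Suc (M - j)) + real (Suc j) = real (Suc (Suc M))" using that by (simp add: of_nat_diff)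
      have gen: "c/(p*q*(p+q+c)) = c/((p+q)*((p+q)+c)) * (1/p + 1/q)" if "p > 0" "q > 0" for p q :: real
        using that c by (simp add: divide_simps; simp add: algebra_simps)
      have "h (M, j) = c / (real (Suc (M - j)) * real (Suc j) * (real (Suc (M - j)) + real (Suc j) + c))"
        unfolding h_def g_def by simp
      also have "\<dots> = c / ((real (Suc (M - j)) + real (Suc j)) * ((real (Suc (M - j)) + real (Suc j)) + c))
          * (1 / real (Suc (M - j)) + 1 / real (Suc j))"
        by (rule gen) auto
      also have "\<dots> = a (Suc M) * (1 / real (Suc (M - j)) + 1 / real (Suc j))"
        unfolding s a_eq ..
      finally show ?thesis .
    qed
    have rev: "(\<Sum>j\<le>M. 1 / real (Suc (M - j))) = hh (Suc M)"
    proof -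
      have "(\<Sum>j\<le>M. 1 / real (Suc (M - j))) = (\<Sum>j<Suc M. (\<lambda>k. 1 / real (Suc k)) (Suc M - Suc j))"
        by (simp add: lessThan_Suc_atMost)
      also have "\<dots> = (\<Sum>j<Suc M. 1 / real (Suc j))" by (rule sum.nat_diff_reindex)
      finally show ?thesis by (simp add: hh_def)
    qed
    have "(\<Sum>j\<le>M. h (M, j)) = (\<Sum>j\<le>M. a (Suc M) * (1 / real (Suc (M - j)) + 1 / real (Suc j)))"
      by (intro sum.cong) (auto simp: hj)
    also have "\<dots> = a (Suc M) * ((\<Sum>j\<le>M. 1 / real (Suc (M - j))) + (\<Sum>j\<le>M. 1 / real (Suc j)))"
      by (simp only: sum_distrib_left[symmetric] sum.distrib)
    also have "(\<Sum>j\<le>M. 1 / real (Suc j)) = hh (Suc M)"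
      unfolding hh_def lessThan_Suc_atMost ..
    also note rev
    finally show ?thesis by (simp add: E_def)
  qed
  have EF: "E sums F"
  proof -
    have "((\<lambda>M. E (Suc M)) has_sum F) UNIV"
    proof (rule has_sum_SigmaD[OF hF])
      fix M :: nat
      show "((\<lambda>j. h (M, j)) has_sum E (Suc M)) {..M}"
        using has_sum_finite[of "{..M}" "\<lambda>j. h (M, j)"] by (simp add: diag)
    qed
    then have "(\<lambda>M. E (Suc M)) sums F" by (rule has_sum_imp_sums)
    then have "E sums (F + E 0)" by (simp only: sums_Suc_iff)
    moreover have "E 0 = 0" by (simp add: E_def hh_def)
    ultimately show ?thesis by simp
  qed
  have AH: "A \<longlonglongrightarrow> shifted_harm c"
    using sh_sums[of c] unfolding sums_def A_def a_def .
  have T0: "(\<lambda>n. T n ^ 2) \<longlonglongrightarrow> 0"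
  proof -
    have "T \<longlonglongrightarrow> shifted_harm c - shifted_harm c" unfolding T_def by (intro tendsto_intros AH)
    then have "(\<lambda>n. T n ^ 2) \<longlonglongrightarrow> 0 ^ 2" by (intro tendsto_intros) simp
    then show ?thesis by simp
  qed
  have tel: "(\<lambda>n. T n ^ 2 - T (Suc n) ^ 2) sums (shifted_harm c ^ 2)"
    using telescope_sums'[OF T0] by (simp add: T_def A_def)
  have s2: "(\<lambda>n. 1 / real (Suc n) ^ 2 - 1 / (real (Suc n) + c) ^ 2) sums shifted_harm2 c"
  proof -
    have "summable (\<lambda>n. 1 / (real (Suc n) + c) ^ 2)"
      by (rule summable_comparison_test[OF _ sq_summable])
         (use c in \<open>auto intro!: exI[of _ 0] divide_left_mono mult_mono simp: power2_eq_square\<close>)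
    then have "summable (\<lambda>n. 1 / real (Suc n) ^ 2 - 1 / (real (Suc n) + c) ^ 2)"
      by (intro summable_diff sq_summable)
    then show ?thesis unfolding shifted_harm2_def by (rule summable_sums)
  qed
  have key: "2 * R n - E n = (T n ^ 2 - T (Suc n) ^ 2) + (1 / real (Suc n) ^ 2 - 1 / (real (Suc n) + c) ^ 2)" for n
  proof -
    have R1: "R n = (hh n + 1 / real (Suc n) + shifted_harm c - (A n + a n)) * a n"
    proof -
      have p: "shifted_harm (real (Suc n) + c) = hh (Suc n) + shifted_harm c - A (Suc n)"
        using sh_partial[of "Suc n" c] unfolding hh_def A_def a_def .
      have hhS: "hh (Suc n) = hh n + 1 / real (Suc n)" unfolding hh_def by simp
      have AS: "A (Suc n) = A n + a n" unfolding A_def by simp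
      show ?thesis by (simp only: R_def p hhS AS)
    qed
    have gen: "2 * ((h + 1/x + Hc - (An + (1/x - 1/(x+c)))) * (1/x - 1/(x+c))) - 2 * (1/x - 1/(x+c)) * h
       = ((Hc - An)^2 - (Hc - (An + (1/x - 1/(x+c))))^2) + (1/x^2 - 1/(x+c)^2)"
      if "x > 0" for x h Hc An :: real
      using that c by (simp add: divide_simps power2_eq_square; simp add: algebra_simps)
    have TS: "T (Suc n) = shifted_harm c - (A n + a n)" by (simp add: T_def A_def)
    show ?thesis unfolding R1 E_def T_def[of n] TS a_def
      by (rule gen) simp
  qed
  have "(\<lambda>n. 2 * R n - E n) sums (2 * F - F)" by (intro sums_diff sums_mult RF EF)
  moreover have "(\<lambda>n. 2 * R n - E n) sums (shifted_harm c ^ 2 + shifted_harm2 c)"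
    unfolding key by (intro sums_add tel s2)
  ultimately have "F = shifted_harm c ^ 2 + shifted_harm2 c" using sums_unique2 by fastforce
  then show ?thesis using RF unfolding R_def a_def by simp
qed



lemma Gs:
  fixes s :: nat and \<alpha> :: real
  assumes "\<alpha> > real s"
  shows "(\<lambda>n. shifted_harm (real (Suc n) + \<alpha>) * (1 / (real (Suc n) + real s) - 1 / (real (Suc n) + \<alpha>))) sums
    ((\<alpha> - real s) * ((shifted_harm (\<alpha> - real s) ^ 2 + shifted_harm2 (\<alpha> - real s)) / (\<alpha> - real s)
          - (\<Sum>j=1..s. shifted_harm (\<alpha> + real j - real s) / (real j * (\<alpha> + real j - real s)))))"
proof -
  define c where "c = \<alpha> - real s"
  have c: "c > 0" using assms by (simp add: c_def)
  define R where "R n = shifted_harm (real (Suc n) + c) * (1 / real (Suc n) - 1 / (real (Suc n) + c))" for n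
  have RF: "R sums (shifted_harm c ^ 2 + shifted_harm2 c)" unfolding R_def by (rule L1[OF c])
  have "(\<lambda>i. R (i + s)) sums (shifted_harm c ^ 2 + shifted_harm2 c - (\<Sum>i<s. R i))"
    by (subst sums_iff_shift) (use RF in simp)
  moreover have "R (i + s) = shifted_harm (real (Suc i) + \<alpha>) * (1 / (real (Suc i) + real s) - 1 / (real (Suc i) + \<alpha>))" for i
  proof -
    have e1: "real (Suc (i + s)) + c = real (Suc i) + \<alpha>" by (simp add: c_def)
    have e2: "real (Suc (i + s)) = real (Suc i) + real s" by simp
    show ?thesis unfolding R_def e1 unfolding e2 ..
  qed
  moreover have "shifted_harm c ^ 2 + shifted_harm2 c - (\<Sum>i<s. R i) =
    (\<alpha> - real s) * ((shifted_harm (\<alpha> - real s) ^ 2 + shifted_harm2 (\<alpha> - real s)) / (\<alpha> - real s)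
          - (\<Sum>j=1..s. shifted_harm (\<alpha> + real j - real s) / (real j * (\<alpha> + real j - real s))))"
  proof -
    have gen: "c * (H / (y * (y + c))) = H * (1 / y - 1 / (y + c))" if "y > 0" for y H :: real
      using that c by (simp add: divide_simps; simp add: algebra_simps)
    have "(\<alpha> - real s) * (\<Sum>j=1..s. shifted_harm (\<alpha> + real j - real s) / (real j * (\<alpha> + real j - real s)))
        = (\<Sum>i<s. c * (shifted_harm (real (Suc i) + c) / (real (Suc i) * (real (Suc i) + c))))"
    proof -
      have sb: "(\<Sum>j=1..s. F j) = (\<Sum>i<s. F (Suc i))" for F :: "nat \<Rightarrow> real"
        by (simp add: sum_bounds_lt_plus1)
      show ?thesis unfolding sb sum_distrib_left c_def
        by (intro sum.cong) (auto simp: algebra_simps)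
    qed
    also have "\<dots> = (\<Sum>i<s. R i)" unfolding R_def by (intro sum.cong refl gen) auto
    finally have 1: "(\<alpha> - real s) * (\<Sum>j=1..s. shifted_harm (\<alpha> + real j - real s) / (real j * (\<alpha> + real j - real s))) = (\<Sum>i<s. R i)" .
    have 2: "(\<alpha> - real s) * ((shifted_harm (\<alpha> - real s) ^ 2 + shifted_harm2 (\<alpha> - real s)) / (\<alpha> - real s))
      = shifted_harm c ^ 2 + shifted_harm2 c" using c by (simp add: c_def)
    show ?thesis unfolding right_diff_distrib[of "\<alpha> - real s" "(shifted_harm (\<alpha> - real s) ^ 2 + shifted_harm2 (\<alpha> - real s)) / (\<alpha> - real s)"] 2 1 ..
  qed
  ultimately show ?thesis by simp
qed

lemma Ds: "(\<lambda>n. 1 / (real (Suc n) + s) - 1 / (real (Suc n) + d)) sums (shifted_harm d - shifted_harm s)"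
proof -
  have "(\<lambda>n. (1 / real (Suc n) - 1 / (real (Suc n) + d)) - (1 / real (Suc n) - 1 / (real (Suc n) + s))) sums (shifted_harm d - shifted_harm s)"
    by (intro sums_diff sh_sums)
  then show ?thesis by simp
qed



theorem corollary2p3:
  fixes r k m :: nat and \<alpha> :: real
  assumes "r > 0" "k > 0" "m > 0" "r \<noteq> k"
    and "\<alpha> > real (max k r)"
    and "\<forall>j::nat. j > 0 \<longrightarrow> \<alpha> - real m \<noteq> - real j"
    and "\<forall>j\<in>{1..m}. \<alpha> \<noteq> real m + real r - real j"
    and "\<forall>j\<in>{1..m}. \<alpha> \<noteq> real m + real k - real j"
  shows "(\<lambda>n. shifted_harm (real (Suc n) + \<alpha> - real m)
                / ((real (Suc n) + real r) * (real (Suc n) + real k)))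
    sums
      ((real k - \<alpha>) / (real k - real r) *
         ((shifted_harm (\<alpha> - real k) ^ 2 + shifted_harm2 (\<alpha> - real k)) / (\<alpha> - real k)
          - (\<Sum>j=1..k. shifted_harm (\<alpha> + real j - real k) / (real j * (\<alpha> + real j - real k))))
     + (\<alpha> - real r) / (real k - real r) *
         ((shifted_harm (\<alpha> - real r) ^ 2 + shifted_harm2 (\<alpha> - real r)) / (\<alpha> - real r)
          - (\<Sum>j=1..r. shifted_harm (\<alpha> + real j - real r) / (real j * (\<alpha> + real j - real r))))
     - 1 / (real k - real r) *
         (\<Sum>j=1..m. (shifted_harm (real j + \<alpha> - real m) - shifted_harm (real r))
                        / (real j + \<alpha> - real m - real r)
                   - (shifted_harm (real j + \<alpha> - real m) - shifted_harm (real k))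
                        / (real j + \<alpha> - real m - real k)))"
proof -
  define d where "d i = real (Suc i) + \<alpha> - real m" for i
  define H where "H = shifted_harm"
  have ar: "\<alpha> > real r" and ak: "\<alpha> > real k" using assms(5) by auto
  have kr: "real k - real r \<noteq> 0" using assms(4) by simp
  have dn0: "real (Suc n) + d i \<noteq> 0" for n i
  proof
    assume "real (Suc n) + d i = 0"
    then have "\<alpha> - real m = - real (Suc n + Suc i)" unfolding d_def by simp
    then show False using assms(6) by blast
  qed
  have dr: "d i \<noteq> real r" and dk: "d i \<noteq> real k" if "i < m" for i
  proof -
    have "Suc i \<in> {1..m}" using that by auto
    then have "\<alpha> \<noteq> real m + real r - real (Suc i)" "\<alpha> \<noteq> real m + real k - real (Suc i)"
      using assms(7,8) by blast+
    then show "d i \<noteq> real r" "d i \<noteq> real k" unfolding d_def by auto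
  qed
  define X where "X s n = shifted_harm (real (Suc n) + \<alpha>) * (1 / (real (Suc n) + real s) - 1 / (real (Suc n) + \<alpha>))" for s n
  define Y where "Y s i n = (1 / (real (Suc n) + real s) - 1 / (real (Suc n) + d i)) / (d i - real s)" for s i n
  define B where "B s = ((shifted_harm (\<alpha> - real s) ^ 2 + shifted_harm2 (\<alpha> - real s)) / (\<alpha> - real s)
          - (\<Sum>j=1..s. shifted_harm (\<alpha> + real j - real s) / (real j * (\<alpha> + real j - real s))))" for s
  define V where "V s i = (shifted_harm (d i) - shifted_harm (real s)) / (d i - real s)" for s i
  have Xs: "X s sums ((\<alpha> - real s) * B s)" if "\<alpha> > real s" for s
    unfolding X_def B_def using Gs[OF that] .
  have Ys: "Y s i sums V s i" for s i
    unfolding Y_def V_def by (intro sums_divide Ds)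
  have tot: "(\<lambda>n. 1 / (real k - real r) * (X r n - X k n - (\<Sum>i<m. Y r i n - Y k i n))) sums
     (1 / (real k - real r) * ((\<alpha> - real r) * B r - (\<alpha> - real k) * B k - (\<Sum>i<m. V r i - V k i)))"
    by (intro sums_mult sums_diff Xs ar ak sums_sum Ys)
  have term_eq: "shifted_harm (real (Suc n) + \<alpha> - real m) / ((real (Suc n) + real r) * (real (Suc n) + real k))
      = 1 / (real k - real r) * (X r n - X k n - (\<Sum>i<m. Y r i n - Y k i n))" for n
  proof -
    define y where "y = real (Suc n)"
    have y: "y > 0" by (simp add: y_def)
    define S where "S = (\<Sum>i<m. 1 / (y + d i))"
    have it: "shifted_harm (y + \<alpha>) = shifted_harm (y + \<alpha> - real m) + S"
    proof -
      have "shifted_harm ((y + \<alpha> - real m) + real m) = shifted_harm (y + \<alpha> - real m) + (\<Sum>i<m. 1 / ((y + \<alpha> - real m) + real (Suc i)))"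
        by (rule sh_iter)
      moreover have "(\<Sum>i<m. 1 / ((y + \<alpha> - real m) + real (Suc i))) = S"
        unfolding S_def by (intro sum.cong refl) (simp add: d_def algebra_simps)
      moreover have "(y + \<alpha> - real m) + real m = y + \<alpha>" by simp
      ultimately show ?thesis by simp
    qed
    have Yi: "Y s i n = 1 / (y + d i) * (1 / (y + real s))" if "d i \<noteq> real s" for s i
    proof -
      have "y + d i \<noteq> 0" using dn0 by (simp add: y_def)
      moreover have "y + real s > 0" using y by simp
      ultimately show ?thesis unfolding Y_def y_def[symmetric] using that
        by (simp add: divide_simps; simp add: algebra_simps)
    qed
    have "(\<Sum>i<m. Y r i n - Y k i n) = (\<Sum>i<m. 1 / (y + d i) * (1 / (y + real r) - 1 / (y + real k)))"
      by (intro sum.cong refl) (simp add: Yi dr dk right_diff_distrib)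
    also have "\<dots> = S * (1 / (y + real r) - 1 / (y + real k))"
      unfolding S_def by (simp add: sum_distrib_right)
    finally have SY: "(\<Sum>i<m. Y r i n - Y k i n) = S * (1 / (y + real r) - 1 / (y + real k))" .
    have gen: "P / ((y + real r) * (y + real k)) = 1 / (real k - real r) *
        ((P + S) * (1 / (y + real r) - 1 / (y + \<alpha>)) - (P + S) * (1 / (y + real k) - 1 / (y + \<alpha>))
          - S * (1 / (y + real r) - 1 / (y + real k)))" for P
    proof -
      have "y + real r > 0" "y + real k > 0" using y by auto
      then show ?thesis using kr by (simp add: divide_simps; simp add: algebra_simps)
    qed
    show ?thesis unfolding SY X_def y_def[symmetric] it by (rule gen)
  qed
  have fin: "1 / (real k - real r) * ((\<alpha> - real r) * B r - (\<alpha> - real k) * B k - (\<Sum>i<m. V r i - V k i))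
    = (real k - \<alpha>) / (real k - real r) * B k + (\<alpha> - real r) / (real k - real r) * B r
      - 1 / (real k - real r) * (\<Sum>j=1..m. (shifted_harm (real j + \<alpha> - real m) - shifted_harm (real r))
                        / (real j + \<alpha> - real m - real r)
                   - (shifted_harm (real j + \<alpha> - real m) - shifted_harm (real k))
                        / (real j + \<alpha> - real m - real k))"
  proof -
    have "(\<Sum>j=1..m. (shifted_harm (real j + \<alpha> - real m) - shifted_harm (real r))
                        / (real j + \<alpha> - real m - real r)
                   - (shifted_harm (real j + \<alpha> - real m) - shifted_harm (real k))
                        / (real j + \<alpha> - real m - real k)) = (\<Sum>i<m. V r i - V k i)"
      by (subst sum_bounds_lt_plus1[symmetric]) (simp add: V_def d_def)
    then show ?thesis using kr by (simp add: divide_simps; simp add: algebra_simps)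
  qed
  show ?thesis
    using tot unfolding term_eq[symmetric] fin unfolding B_def .
qed

end
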